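(* Let $0<\underline b\le\bar b<\infty$ and $0<\underline\theta\le\bar\theta<\infty$. There exists a constant $C>0$ depending only on $\nu,\underline b,\bar b,\underline\theta,\bar\theta$ such that for all $\delta\in(0,1]$, $b\in[\underline b,\bar b]$, $\theta\in[\underline\theta,\bar\theta]$ and $\lambda\in[-\pi,\pi]$: $$a^*_{b,\delta\theta}(\lambda)\le a^\delta_{b,\theta}(\lambda)\le a^*_{b,\delta\theta}(\lambda)+C\delta^{2\nu},\qquad a^\delta_{b,\theta}(\lambda)\le C\,g^*_{\nu,\delta\theta}(\lambda).$$
   Context: Fix $\nu\ge1/2$. For $\alpha>0$, $\omega\in\mathbb R$ let $g^*_{\nu,\alpha}(\omega)=C_\nu\alpha^{2\nu}(\alpha^2+\omega^2)^{-(\nu+1/2)}$ with $C_\nu=\Gamma(\nu+\frac12)/(\sqrt\pi\,\Gamma(\nu))$. For $\delta,\theta>0$ and $\lambda\in[-\pi,\pi]$ let $g^\delta_{\nu,\theta}(\lambda)=\sum_{k\in\mathbb Z}g^*_{\nu,\delta\theta}(\lambda+2k\pi)$. For $b>0$: $a^\delta_{b,\theta}=\dfrac{b\,g^\delta_{\nu,\theta}}{b\,g^\delta_{\nu,\theta}+(2\pi)^{-1}}$ and $a^*_{b,\alpha}=\dfrac{b\,g^*_{\nu,\alpha}}{b\,g^*_{\nu,\alpha}+(2\pi)^{-1}}$. *)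

theory Defs
  imports "HOL-Analysis.Analysis"
begin

definition C_nu :: "real \<Rightarrow> real" where
  "C_nu \<nu> = Gamma (\<nu> + 1/2) / (sqrt pi * Gamma \<nu>)"

definition g_star :: "real \<Rightarrow> real \<Rightarrow> real \<Rightarrow> real" where
  "g_star \<nu> \<alpha> \<omega> = C_nu \<nu> * \<alpha> powr (2*\<nu>) * (\<alpha>\<^sup>2 + \<omega>\<^sup>2) powr (-(\<nu> + 1/2))"

definition g_delta :: "real \<Rightarrow> real \<Rightarrow> real \<Rightarrow> real \<Rightarrow> real" where
  "g_delta \<nu> \<delta> \<theta> lam = infsum (\<lambda>k::int. g_star \<nu> (\<delta>*\<theta>) (lam + 2 * of_int k * pi)) UNIV"

definition a_delta :: "real \<Rightarrow> real \<Rightarrow> real \<Rightarrow> real \<Rightarrow> real \<Rightarrow> real" where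
  "a_delta \<nu> \<delta> b \<theta> lam = b * g_delta \<nu> \<delta> \<theta> lam / (b * g_delta \<nu> \<delta> \<theta> lam + 1 / (2*pi))"

definition a_star :: "real \<Rightarrow> real \<Rightarrow> real \<Rightarrow> real \<Rightarrow> real" where
  "a_star \<nu> b \<alpha> \<omega> = b * g_star \<nu> \<alpha> \<omega> / (b * g_star \<nu> \<alpha> \<omega> + 1 / (2*pi))"

end

theory Submission imports Defs begin


definition hh :: "int \<Rightarrow> real" where "hh k = inverse (real_of_int k ^ 2)"

lemma hh_summable: "hh summable_on UNIV"
proof -
  have s: "(\<lambda>n::nat. inverse (real n ^ 2)) summable_on UNIV"
    by (rule summable_nonneg_imp_summable_on[OF inverse_power_summable]) auto
  have A: "hh summable_on range int"
    using s by (subst summable_on_reindex) (auto simp: o_def hh_def inj_on_def)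
  have B: "hh summable_on range (\<lambda>n. - int n)"
    using s by (subst summable_on_reindex) (auto simp: o_def hh_def inj_on_def)
  have U: "(UNIV::int set) = range int \<union> range (\<lambda>n. - int n)"
  proof (rule set_eqI, simp)
    fix k :: int
    show "k \<in> range int \<or> k \<in> range (\<lambda>n. - int n)"
    proof (cases "k \<ge> 0")
      case True then have "k = int (nat k)" by simp
      then show ?thesis by blast
    next
      case False then have "k = - int (nat (-k))" by simp
      then show ?thesis by blast
    qed
  qed
  show ?thesis by (subst U, rule summable_on_union[OF A B])
qed

lemma frac_bounds:
  fixes b c x y :: real
  assumes "0 \<le> x" "x \<le> y" "0 < b" "0 < c"
  shows "b*x/(b*x+c) \<le> b*y/(b*y+c)" "b*y/(b*y+c) - b*x/(b*x+c) \<le> b*(y-x)/c"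
        "b*y/(b*y+c) \<le> b*y/c"
proof -
  have p1: "b*x \<ge> 0" "b*y \<ge> b*x" using assms by (auto intro: mult_left_mono)
  have d1: "b*x+c > 0" "b*y+c > 0" using p1 assms by linarith+
  have eq: "b*y/(b*y+c) - b*x/(b*x+c) = b*c*(y-x)/((b*y+c)*(b*x+c))"
    using d1 by (simp add: field_simps)
  have "b*c*(y-x)/((b*y+c)*(b*x+c)) \<ge> 0" using p1 assms by simp
  then show "b*x/(b*x+c) \<le> b*y/(b*y+c)" using eq by simp
  have den: "(b*y+c)*(b*x+c) \<ge> c*c" using p1 assms by (intro mult_mono) auto
  have num: "b*c*(y-x) \<ge> 0" using assms by simp
  have "b*c*(y-x)/((b*y+c)*(b*x+c)) \<le> b*c*(y-x)/(c*c)"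
    using den num assms d1 by (intro divide_left_mono mult_pos_pos) auto
  also have "\<dots> = b*(y-x)/c" using assms by simp
  finally show "b*y/(b*y+c) - b*x/(b*x+c) \<le> b*(y-x)/c" using eq by simp
  show "b*y/(b*y+c) \<le> b*y/c" using p1 assms d1 by (intro divide_left_mono mult_pos_pos) auto
qed

lemma C_nu_pos: "\<nu> > 0 \<Longrightarrow> C_nu \<nu> > 0"
  unfolding C_nu_def by (intro divide_pos_pos mult_pos_pos Gamma_real_pos) auto

lemma term_bound:
  fixes k :: int and lam \<alpha> \<nu> :: real
  assumes "k \<noteq> 0" "\<bar>lam\<bar> \<le> pi" "\<alpha> > 0" "\<nu> \<ge> 1/2"
  shows "g_star \<nu> \<alpha> (lam + 2 * of_int k * pi) \<le> C_nu \<nu> * \<alpha> powr (2*\<nu>) * hh k"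
proof -
  define w where "w = lam + 2 * of_int k * pi"
  have pi1: "pi \<ge> 1" using pi_gt3 by simp
  have "\<bar>w\<bar> \<ge> \<bar>real_of_int k\<bar>"
  proof (cases "k > 0")
    case True
    then have k1: "real_of_int k \<ge> 1" by simp
    have "real_of_int k * pi \<ge> real_of_int k * 1" using k1 pi1 by (intro mult_left_mono) auto
    moreover have "real_of_int k * pi \<ge> 1 * pi" using k1 by (intro mult_right_mono) auto
    ultimately have "w \<ge> real_of_int k" using k1 assms(2) unfolding w_def by linarith
    then show ?thesis using k1 by linarith
  next
    case False
    then have k1: "real_of_int k \<le> -1" using assms(1) by simp
    have "real_of_int k * pi \<le> real_of_int k * 1" using k1 pi1 by (intro mult_left_mono_neg) auto
    moreover have "real_of_int k * pi \<le> (-1) * pi" using k1 by (intro mult_right_mono) auto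
    ultimately have "w \<le> real_of_int k" using k1 assms(2) unfolding w_def by linarith
    then show ?thesis using k1 by linarith
  qed
  then have wk: "w^2 \<ge> real_of_int k ^ 2" by (metis abs_le_square_iff)
  have k2: "real_of_int k ^ 2 \<ge> 1" using assms(1)
  proof -
    have "\<bar>real_of_int k\<bar> \<ge> 1" using assms(1) by linarith
    then show ?thesis by (metis abs_le_square_iff abs_one one_power2)
  qed
  define q where "q = \<alpha>^2 + w^2"
  have q1: "q \<ge> real_of_int k ^ 2" using wk unfolding q_def by (simp add: add_increasing)
  have "q powr (-(\<nu>+1/2)) \<le> q powr (-1)"
    using q1 k2 assms(4) by (intro powr_mono) auto
  also have "\<dots> = inverse q" using q1 k2 by (simp add: powr_minus)
  also have "\<dots> \<le> hh k" unfolding hh_def using q1 k2 by (intro le_imp_inverse_le) auto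
  finally have "q powr (-(\<nu>+1/2)) \<le> hh k" .
  then show ?thesis unfolding g_star_def w_def[symmetric] q_def[symmetric]
    using C_nu_pos[of \<nu>] assms(4) by (intro mult_left_mono) auto
qed


theorem lemma5p2:
  fixes \<nu> b_lo b_hi th_lo th_hi :: real
  assumes "\<nu> \<ge> 1/2"
    and "0 < b_lo" "b_lo \<le> b_hi"
    and "0 < th_lo" "th_lo \<le> th_hi"
  shows "\<exists>C>0. \<forall>\<delta> b \<theta> lam. \<delta> \<in> {0<..1} \<longrightarrow> b \<in> {b_lo..b_hi} \<longrightarrow>
            \<theta> \<in> {th_lo..th_hi} \<longrightarrow> lam \<in> {-pi..pi} \<longrightarrow>
            a_star \<nu> b (\<delta>*\<theta>) lam \<le> a_delta \<nu> \<delta> b \<theta> lam \<and>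
            a_delta \<nu> \<delta> b \<theta> lam \<le> a_star \<nu> b (\<delta>*\<theta>) lam + C * \<delta> powr (2*\<nu>) \<and>
            a_delta \<nu> \<delta> b \<theta> lam \<le> C * g_star \<nu> (\<delta>*\<theta>) lam"
proof -
  define Cn where "Cn = C_nu \<nu>"
  have Cn: "Cn > 0" unfolding Cn_def using assms(1) by (intro C_nu_pos) auto
  define S where "S = infsum hh (UNIV - {0})"
  have hsum: "hh summable_on (UNIV - {0})" using hh_summable summable_on_subset by blast
  have S0: "S \<ge> 0" unfolding S_def by (intro infsum_nonneg) (simp add: hh_def)
  define T where "T = th_hi powr (2*\<nu>)"
  have T0: "T \<ge> 0" unfolding T_def by simp
  define P where "P = (th_hi^2 + pi^2) powr (\<nu> + 1/2)"
  have P0: "P \<ge> 0" unfolding P_def by simp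
  define C where "C = 2*pi*b_hi*(Cn*T*S + 1 + S*P) + 1"
  have bh: "b_hi > 0" using assms by simp
  have "2*pi*b_hi*(Cn*T*S + 1 + S*P) \<ge> 0" using Cn T0 S0 P0 bh by simp
  then have C0: "C > 0" unfolding C_def by linarith
  have main: "a_star \<nu> b (\<delta>*\<theta>) lam \<le> a_delta \<nu> \<delta> b \<theta> lam \<and>
            a_delta \<nu> \<delta> b \<theta> lam \<le> a_star \<nu> b (\<delta>*\<theta>) lam + C * \<delta> powr (2*\<nu>) \<and>
            a_delta \<nu> \<delta> b \<theta> lam \<le> C * g_star \<nu> (\<delta>*\<theta>) lam"
    if d: "\<delta> \<in> {0<..1}" and bb: "b \<in> {b_lo..b_hi}" and th: "\<theta> \<in> {th_lo..th_hi}"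
      and l: "lam \<in> {-pi..pi}" for \<delta> b \<theta> lam
  proof -
    define \<alpha> where "\<alpha> = \<delta>*\<theta>"
    have a0: "\<alpha> > 0" unfolding \<alpha>_def using d th assms by auto
    have ah: "\<alpha> \<le> th_hi" unfolding \<alpha>_def using d th assms
    proof -
      have "\<delta>*\<theta> \<le> 1*\<theta>" using d th assms by (intro mult_right_mono) auto
      then show "\<delta>*\<theta> \<le> th_hi" using th by simp
    qed
    have b0: "b > 0" "b \<le> b_hi" using bb assms by auto
    have labs: "\<bar>lam\<bar> \<le> pi" using l by auto
    define G where "G = (\<lambda>k::int. g_star \<nu> \<alpha> (lam + 2 * of_int k * pi))"
    have Gnn: "G k \<ge> 0" for k unfolding G_def g_star_def Cn_def[symmetric] using Cn a0 by simp
    define A where "A = Cn * \<alpha> powr (2*\<nu>)"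
    have A0: "A \<ge> 0" unfolding A_def using Cn by simp
    have Gb: "G k \<le> A * hh k" if "k \<in> UNIV - {0}" for k
      unfolding G_def A_def Cn_def using term_bound[of k lam \<alpha> \<nu>] that labs a0 assms(1) by auto
    have Gs: "G summable_on (UNIV - {0})"
      by (rule summable_on_comparison_test[OF summable_on_cmult_right[OF hsum, of A]]) (use Gb Gnn in auto)
    define R where "R = infsum G (UNIV - {0})"
    have R0: "R \<ge> 0" unfolding R_def by (intro infsum_nonneg) (use Gnn in auto)
    have RA: "R \<le> A * S"
    proof -
      have "R \<le> infsum (\<lambda>k. A * hh k) (UNIV - {0})" unfolding R_def
        by (rule infsum_mono[OF Gs summable_on_cmult_right[OF hsum]]) (use Gb in auto)
      also have "\<dots> = A * S" unfolding S_def by (rule infsum_cmult_right[OF hsum])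
      finally show ?thesis .
    qed
    have U: "(UNIV::int set) = insert 0 (UNIV - {0})" by auto
    have gd: "g_delta \<nu> \<delta> \<theta> lam = G 0 + R"
      unfolding g_delta_def R_def \<alpha>_def[symmetric] G_def[symmetric]
      by (subst U, rule infsum_insert[OF Gs]) auto
    define x where "x = g_star \<nu> \<alpha> lam"
    have xG: "G 0 = x" unfolding G_def x_def by simp
    have x0: "x \<ge> 0" using Gnn[of 0] xG by simp
    define c where "c = 1/(2*pi)"
    have c0: "c > 0" unfolding c_def by simp
    have ad: "a_delta \<nu> \<delta> b \<theta> lam = b*(x+R)/(b*(x+R)+c)"
      unfolding a_delta_def gd xG c_def ..
    have as: "a_star \<nu> b (\<delta>*\<theta>) lam = b*x/(b*x+c)"
      unfolding a_star_def \<alpha>_def[symmetric] x_def c_def ..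
    note fb = frac_bounds[of x "x+R" b c, OF x0 _ b0(1) c0]
    have ic: "1/c = 2*pi" unfolding c_def by simp
    have Apow: "\<alpha> powr (2*\<nu>) \<le> T * \<delta> powr (2*\<nu>)"
    proof -
      have "\<alpha> powr (2*\<nu>) = \<delta> powr (2*\<nu>) * \<theta> powr (2*\<nu>)"
        unfolding \<alpha>_def using d th assms by (simp add: powr_mult)
      also have "\<dots> \<le> \<delta> powr (2*\<nu>) * T" unfolding T_def using th assms
        by (intro mult_left_mono powr_mono2) auto
      finally show ?thesis by (simp add: mult.commute)
    qed
    have first: "b*x/(b*x+c) \<le> b*(x+R)/(b*(x+R)+c)" using fb(1) R0 by simp
    have second: "b*(x+R)/(b*(x+R)+c) \<le> b*x/(b*x+c) + C * \<delta> powr (2*\<nu>)"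
    proof -
      have "b*(x+R)/(b*(x+R)+c) - b*x/(b*x+c) \<le> b*((x+R)-x)/c" using fb(2) R0 by simp
      also have "\<dots> = 2*pi*b*R" unfolding c_def by simp
      also have "\<dots> \<le> 2*pi*b_hi*(A*S)"
        using b0 R0 RA A0 S0 by (intro mult_mono) auto
      also have "\<dots> \<le> 2*pi*b_hi*(Cn*T*S) * \<delta> powr (2*\<nu>)"
      proof -
        have "A*S \<le> Cn*(T*\<delta> powr (2*\<nu>))*S" unfolding A_def
          using Apow Cn S0 by (intro mult_right_mono mult_left_mono) auto
        then have "2*pi*b_hi*(A*S) \<le> 2*pi*b_hi*(Cn*(T*\<delta> powr (2*\<nu>))*S)"
          using bh by (intro mult_left_mono) auto
        then show ?thesis by (simp add: algebra_simps)
      qed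
      also have "\<dots> \<le> C * \<delta> powr (2*\<nu>)" unfolding C_def
        using Cn T0 S0 P0 bh by (intro mult_right_mono) (auto simp: algebra_simps)
      finally show ?thesis by simp
    qed
    have third: "b*(x+R)/(b*(x+R)+c) \<le> C * x"
    proof -
      define q where "q = \<alpha>^2 + lam^2"
      have q0: "q > 0" unfolding q_def using a0 by (simp add: add_pos_nonneg)
      have xq: "A = x * q powr (\<nu> + 1/2)"
        unfolding A_def x_def g_star_def q_def[symmetric] Cn_def using q0
        by (simp add: powr_minus field_simps)
      have qP: "q powr (\<nu> + 1/2) \<le> P" unfolding P_def q_def
      proof (intro powr_mono2)
        have "\<alpha>^2 \<le> th_hi^2" using a0 ah by (intro power_mono) auto
        moreover have "lam^2 \<le> pi^2" proof -
          have "\<bar>lam\<bar> \<le> \<bar>pi\<bar>" using labs by simp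
          then show ?thesis by (metis abs_le_square_iff)
        qed
        ultimately show "\<alpha>\<^sup>2 + lam\<^sup>2 \<le> th_hi\<^sup>2 + pi\<^sup>2" by simp
      qed (use assms(1) in auto)
      have AxP: "A \<le> x * P" using xq qP x0 by (simp add: mult_left_mono)
      have "b*(x+R)/(b*(x+R)+c) \<le> b*(x+R)/c" using fb(3) R0 by simp
      also have "\<dots> = 2*pi*b*(x+R)" unfolding c_def by simp
      also have "\<dots> \<le> 2*pi*b_hi*(x + x*P*S)"
      proof -
        have "R \<le> x*P*S" using RA AxP S0 by (meson mult_right_mono order_trans)
        then show ?thesis using b0 x0 R0 by (intro mult_mono) auto
      qed
      also have "\<dots> = 2*pi*b_hi*(1 + S*P) * x" by (simp add: algebra_simps)
      also have "\<dots> \<le> C * x" unfolding C_def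
        using x0 Cn T0 S0 P0 bh by (intro mult_right_mono) (auto simp: algebra_simps)
      finally show ?thesis .
    qed
    show ?thesis unfolding ad as using first second third x_def \<alpha>_def by simp
  qed
  show ?thesis using C0 main by blast
qed

end
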